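(* Let $s\ge1$ and let $\beta_1,\dotsc,\beta_s$ be positive integers. Then, as an identity of rational functions in $z_1,\dotsc,z_s,w_1$ (with $q$ an indeterminate), \[ \prod_{1\le i<j\le s}\Big(\frac{z_i}{z_j};q\Big)_{\beta_i}\Big(\frac{qz_j}{z_i};q\Big)_{\beta_j}\prod_{i=1}^s\Big(\frac{z_i}{w_1};q\Big)_{\beta_i}^{-1}=\sum_{a=1}^s\sum_{b=0}^{\beta_a-1}G_{a,b}, \] where \[ G_{a,b}=\Big(1-\frac{q^bz_a}{w_1}\Big)^{-1}B_{a,b}\prod_{\substack{1\le i<j\le s\\ i,j\ne a}}\Big(\frac{z_i}{z_j};q\Big)_{\beta_i}\Big(\frac{qz_j}{z_i};q\Big)_{\beta_j}, \] \[ B_{a,b}=\frac{q^{b\sum_{k=1}^{a-1}\beta_k+(b+1)\sum_{k=a+1}^s\beta_k}}{(q^{-b};q)_b(q;q)_{\beta_a-b-1}}\prod_{1\le i<a}\Big(q^{1-\beta_i}\frac{z_a}{z_i};q\Big)_b\Big(q^{b+1}\frac{z_a}{z_i};q\Big)_{\beta_a-b}\prod_{a<j\le s}\Big(q^{-\beta_j}\frac{z_a}{z_j};q\Big)_{b+1}\Big(q^{b+1}\frac{z_a}{z_j};q\Big)_{\beta_a-b-1}. \]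
   Context: $(z;q)_n=(1-z)(1-qz)\dotsm(1-q^{n-1}z)$ for $n\ge1$ and $(z;q)_0=1$. *)

theory Defs
  imports Complex_Main
begin

definition qpoch :: "'a::field \<Rightarrow> 'a \<Rightarrow> nat \<Rightarrow> 'a" where
  "qpoch z q n = (\<Prod>k<n. 1 - q ^ k * z)"

definition pairs :: "nat \<Rightarrow> (nat \<times> nat) set" where
  "pairs s = {(i, j). 1 \<le> i \<and> i < j \<and> j \<le> s}"

definition Bcoef :: "nat \<Rightarrow> (nat \<Rightarrow> nat) \<Rightarrow> (nat \<Rightarrow> complex) \<Rightarrow> complex \<Rightarrow> nat \<Rightarrow> nat \<Rightarrow> complex" where
  "Bcoef s \<beta> z q a b =
     q ^ (b * (\<Sum>k\<in>{1..<a}. \<beta> k) + (b + 1) * (\<Sum>k\<in>{a<..s}. \<beta> k))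
     / (qpoch (q powi (- int b)) q b * qpoch q q (\<beta> a - b - 1))
     * (\<Prod>i\<in>{1..<a}. qpoch (q powi (1 - int (\<beta> i)) * z a / z i) q b
                        * qpoch (q ^ (b + 1) * z a / z i) q (\<beta> a - b))
     * (\<Prod>j\<in>{a<..s}. qpoch (q powi (- int (\<beta> j)) * z a / z j) q (b + 1)
                        * qpoch (q ^ (b + 1) * z a / z j) q (\<beta> a - b - 1))"

end

theory Submission
  imports Defs
begin


lemma prod_int_shift:
  fixes f :: "int \<Rightarrow> 'a::comm_monoid_mult"
  shows "(\<Prod>k<n. f (int k + a)) = (\<Prod>e\<in>{a..<a + int n}. f e)"
proof (induction n)
  case 0 then show ?case by simp
next
  case (Suc n)
  have "{a..<a + int (Suc n)} = insert (a + int n) {a..<a + int n}" by auto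
  then show ?case using Suc by (simp add: mult.commute add.commute)
qed

lemma prod_int_split:
  fixes f :: "int \<Rightarrow> 'a::comm_monoid_mult"
  assumes "a \<le> b" "b \<le> c"
  shows "(\<Prod>e\<in>{a..<c}. f e) = (\<Prod>e\<in>{a..<b}. f e) * (\<Prod>e\<in>{b..<c}. f e)"
proof -
  have "{a..<c} = {a..<b} \<union> {b..<c}" using assms by auto
  then show ?thesis by (simp add: prod.union_disjoint ivl_disj_int)
qed

lemma qpoch_L1:
  fixes y q :: "'a::field"
  assumes y: "y \<noteq> 0" and q: "q \<noteq> 0"
  shows "qpoch y q c * qpoch (q / y) q m
       = q ^ (c * m) * qpoch (q powi (- int m) * y) q c
         * (\<Prod>k<m. 1 - q powi (int k + 1 - int c) / y)"
proof -
  define h where "h e = 1 - q powi e * y" for e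
  have A: "qpoch y q c = (\<Prod>e\<in>{0..<int c}. h e)"
  proof -
    have "qpoch y q c = (\<Prod>k<c. h (int k + 0))" by (simp add: qpoch_def h_def power_int_of_nat)
    also have "\<dots> = (\<Prod>e\<in>{0..<0 + int c}. h e)" by (rule prod_int_shift)
    finally show ?thesis by simp
  qed
  have t1: "1 - q ^ k * (q / y) = (- (q ^ (k+1) / y)) * h (- (int k + 1))" for k
  proof -
    have "q powi (- (int k + 1)) = inverse (q ^ (k+1))"
    proof -
      have e: "- (int k + 1) = - int (k+1)" by simp
      show ?thesis unfolding e power_int_minus power_int_of_nat ..
    qed
    then show ?thesis using y q by (simp add: h_def field_simps)
  qed
  have "qpoch (q / y) q m = (\<Prod>k<m. - (q ^ (k+1) / y)) * (\<Prod>k<m. h (- (int k + 1)))"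
    unfolding qpoch_def t1 by (rule prod.distrib)
  also have "(\<Prod>k<m. h (- (int k + 1))) = (\<Prod>k<m. h (- (int (m - Suc k) + 1)))"
    by (rule prod.nat_diff_reindex[symmetric])
  also have "\<dots> = (\<Prod>k<m. h (int k + (- int m)))"
    by (rule prod.cong) (auto simp: of_nat_diff)
  also have "\<dots> = (\<Prod>e\<in>{- int m..<- int m + int m}. h e)" by (rule prod_int_shift)
  finally have B: "qpoch (q / y) q m = (\<Prod>k<m. - (q ^ (k+1) / y)) * (\<Prod>e\<in>{- int m..<0}. h e)" by simp
  have C: "qpoch (q powi (- int m) * y) q c = (\<Prod>e\<in>{- int m..<int c - int m}. h e)"
  proof -
    have "qpoch (q powi (- int m) * y) q c = (\<Prod>k<c. h (int k + (- int m)))"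
    proof -
      have "q powi (int k + - int m) = q^k * q powi (-int m)" for k
        using q power_int_add[of q "int k" "- int m"] by (simp add: power_int_of_nat)
      then show ?thesis unfolding qpoch_def h_def by (simp add: mult.assoc)
    qed
    also have "\<dots> = (\<Prod>e\<in>{- int m..<- int m + int c}. h e)" by (rule prod_int_shift)
    finally show ?thesis by simp
  qed
  have t2: "1 - q powi (int k + 1 - int c) / y = q powi (- int c) * (- (q ^ (k+1) / y)) * h (int c - int k - 1)" for k
  proof -
    have e1: "q powi (int k + 1 - int c) = q powi (-int c) * q ^ (k+1)"
      using q by (simp add: power_int_add[symmetric] power_int_of_nat[symmetric] algebra_simps)
    have e2: "q powi (int c - int k - 1) = inverse (q powi (int k + 1 - int c))"
    proof -
      have "int c - int k - 1 = -(int k + 1 - int c)" by simp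
      then show ?thesis by (simp only: power_int_minus)
    qed
    show ?thesis unfolding h_def e2 e1 using q y
      by (simp add: field_simps power_int_minus)
  qed
  have D: "(\<Prod>k<m. 1 - q powi (int k + 1 - int c) / y)
      = (q powi (- int c)) ^ m * (\<Prod>k<m. - (q ^ (k+1) / y)) * (\<Prod>e\<in>{int c - int m..<int c}. h e)"
  proof -
    have "(\<Prod>k<m. 1 - q powi (int k + 1 - int c) / y)
        = (q powi (- int c)) ^ m * (\<Prod>k<m. - (q ^ (k+1) / y)) * (\<Prod>k<m. h (int c - int k - 1))"
      unfolding t2 prod.distrib by simp
    also have "(\<Prod>k<m. h (int c - int k - 1)) = (\<Prod>k<m. h (int c - int (m - Suc k) - 1))"
      by (rule prod.nat_diff_reindex[symmetric])
    also have "\<dots> = (\<Prod>k<m. h (int k + (int c - int m)))"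
      by (rule prod.cong) (auto simp: of_nat_diff algebra_simps)
    also have "\<dots> = (\<Prod>e\<in>{int c - int m..<(int c - int m) + int m}. h e)" by (rule prod_int_shift)
    also have "\<dots> = (\<Prod>e\<in>{int c - int m..<int c}. h e)" by simp
    finally show ?thesis .
  qed
  have E: "(\<Prod>e\<in>{0..<int c}. h e) * (\<Prod>e\<in>{- int m..<0}. h e)
         = (\<Prod>e\<in>{- int m..<int c - int m}. h e) * (\<Prod>e\<in>{int c - int m..<int c}. h e)"
    using prod_int_split[of "- int m" 0 "int c" h] prod_int_split[of "- int m" "int c - int m" "int c" h]
    by (simp add: mult.commute)
  have F: "q ^ (c * m) * (q powi (- int c)) ^ m = 1"
    using q by (simp add: power_int_minus power_mult power_inverse[symmetric] field_simps)
  show ?thesis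
    unfolding A B C D
    using E F by (simp add: algebra_simps)
qed



lemma pf_two:
  fixes a b x :: "'a::field"
  assumes "a \<noteq> b" "a \<noteq> 0" "b \<noteq> 0" "1 - a * x \<noteq> 0" "1 - b * x \<noteq> 0"
  shows "inverse (1 - a * x) * inverse (1 - b * x)
       = inverse (1 - a / b) * inverse (1 - b * x) + inverse (1 - b / a) * inverse (1 - a * x)"
proof -
  have h1: "inverse (1 - a / b) = b / (b - a)" "inverse (1 - b / a) = a / (a - b)"
    using assms by (auto simp: field_simps)
  have "b - a \<noteq> 0" "a - b \<noteq> 0" using assms by auto
  note nz = this
  define u where "u = 1 - a * x"
  define v where "v = 1 - b * x"
  have uv: "u \<noteq> 0" "v \<noteq> 0" using assms by (auto simp: u_def v_def)
  have rel: "b*u - a*v = b - a" by (simp add: u_def v_def algebra_simps)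
  have e1: "inverse u * inverse v = (b*u - a*v)/((b-a)*u*v)"
    unfolding rel using nz uv by (simp add: field_simps)
  define d where "d = b - a"
  have dd: "a - b = - d" "d \<noteq> 0" using nz by (auto simp: d_def)
  have e2: "(b*u - a*v)/((b-a)*u*v) = b/(b-a) * inverse v + a/(a-b) * inverse u"
    unfolding dd(1) d_def[symmetric] using dd(2) uv by (simp add: field_simps)
  show ?thesis unfolding h1 using e1 e2 by (simp add: u_def v_def)
qed

lemma partial_fractions:
  fixes n :: "'b \<Rightarrow> 'a::field"
  assumes "finite I" "I \<noteq> {}" "inj_on n I" "\<forall>i\<in>I. n i \<noteq> 0" "\<forall>i\<in>I. 1 - n i * x \<noteq> 0"
  shows "inverse (\<Prod>i\<in>I. 1 - n i * x)
       = (\<Sum>i\<in>I. inverse (\<Prod>j\<in>I - {i}. 1 - n j / n i) * inverse (1 - n i * x))"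
  using assms
proof (induction I arbitrary: x rule: finite_ne_induct)
  case (singleton k) then show ?case by simp
next
  case (insert k F)
  let ?c = "\<lambda>i. inverse (\<Prod>j\<in>F - {i}. 1 - n j / n i)"
  have injF: "inj_on n F" using insert.prems by (auto simp: inj_on_def)
  have nk: "\<forall>i\<in>F. n i \<noteq> n k" using insert.prems insert.hyps by (auto simp: inj_on_def)
  have IH1: "inverse (\<Prod>i\<in>F. 1 - n i * x) = (\<Sum>i\<in>F. ?c i * inverse (1 - n i * x))"
    using insert.IH[of x] insert.prems injF by auto
  have IH2: "inverse (\<Prod>i\<in>F. 1 - n i * (1 / n k)) = (\<Sum>i\<in>F. ?c i * inverse (1 - n i * (1 / n k)))"
    apply (rule insert.IH[OF injF])
    using insert.prems nk by (auto simp: field_simps)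
  have LHS: "inverse (\<Prod>i\<in>insert k F. 1 - n i * x)
      = (\<Sum>i\<in>F. ?c i * (inverse (1 - n k * x) * inverse (1 - n i * x)))"
    using insert.hyps IH1 by (simp add: sum_distrib_left mult.assoc mult.left_commute)
  have sp: "inverse (1 - n k * x) * inverse (1 - n i * x)
      = inverse (1 - n k / n i) * inverse (1 - n i * x) + inverse (1 - n i / n k) * inverse (1 - n k * x)"
    if "i \<in> F" for i
    apply (rule pf_two) using that nk insert.prems by auto
  have termk: "inverse (\<Prod>j\<in>insert k F - {k}. 1 - n j / n k) * inverse (1 - n k * x)
      = (\<Sum>i\<in>F. ?c i * (inverse (1 - n i / n k) * inverse (1 - n k * x)))"
  proof -
    have "insert k F - {k} = F" using insert.hyps by auto
    then have "inverse (\<Prod>j\<in>insert k F - {k}. 1 - n j / n k) = (\<Sum>i\<in>F. ?c i * inverse (1 - n i / n k))"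
      using IH2 by simp
    then show ?thesis by (simp add: sum_distrib_right mult.assoc)
  qed
  have termi: "inverse (\<Prod>j\<in>insert k F - {i}. 1 - n j / n i) * inverse (1 - n i * x)
      = ?c i * (inverse (1 - n k / n i) * inverse (1 - n i * x))" if "i \<in> F" for i
  proof -
    have "insert k F - {i} = insert k (F - {i})" using that insert.hyps by auto
    then have "(\<Prod>j\<in>insert k F - {i}. 1 - n j / n i) = (1 - n k / n i) * (\<Prod>j\<in>F - {i}. 1 - n j / n i)"
      using insert.hyps by simp
    then show ?thesis by (simp add: mult.assoc mult.left_commute)
  qed
  have "(\<Sum>i\<in>insert k F. inverse (\<Prod>j\<in>insert k F - {i}. 1 - n j / n i) * inverse (1 - n i * x))
      = inverse (\<Prod>j\<in>insert k F - {k}. 1 - n j / n k) * inverse (1 - n k * x)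
        + (\<Sum>i\<in>F. inverse (\<Prod>j\<in>insert k F - {i}. 1 - n j / n i) * inverse (1 - n i * x))"
    using insert.hyps by simp
  also have "\<dots> = (\<Sum>i\<in>F. ?c i * (inverse (1 - n i / n k) * inverse (1 - n k * x)))
        + (\<Sum>i\<in>F. ?c i * (inverse (1 - n k / n i) * inverse (1 - n i * x)))"
  proof -
    have S: "(\<Sum>i\<in>F. inverse (\<Prod>j\<in>insert k F - {i}. 1 - n j / n i) * inverse (1 - n i * x))
       = (\<Sum>i\<in>F. ?c i * (inverse (1 - n k / n i) * inverse (1 - n i * x)))"
      by (rule sum.cong[OF refl termi])
    show ?thesis by (simp only: termk S)
  qed
  also have "\<dots> = (\<Sum>i\<in>F. ?c i * (inverse (1 - n k * x) * inverse (1 - n i * x)))"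
    by (simp add: sum.distrib[symmetric] sp distrib_left add.commute cong: sum.cong)
  finally show ?case using LHS by simp
qed

lemma qpoch_add: "qpoch y q (c + d) = qpoch y q c * qpoch (q ^ c * y) q d"
  by (induction d) (simp_all add: qpoch_def power_add mult.assoc)



lemma powi_diff_nat:
  fixes q :: "'a::field"
  assumes "q \<noteq> 0"
  shows "q powi (int k - int b) = q ^ k / q ^ b"
  using assms by (simp add: power_int_diff power_int_of_nat)

lemma pair_lower:
  fixes q :: "'a::field"
  assumes q: "q \<noteq> 0" and zi: "zi \<noteq> 0" and za: "za \<noteq> 0" and b: "b < n"
  shows "qpoch (zi / za) q m * qpoch (q * za / zi) q n
       = q ^ (b * m) * (qpoch (q powi (1 - int m) * za / zi) q b * qpoch (q ^ (b + 1) * za / zi) q (n - b))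
         * (\<Prod>k<m. 1 - q ^ k * zi / (q ^ b * za))"
proof -
  define y where "y = q * za / zi"
  have y: "y \<noteq> 0" using q zi za by (simp add: y_def)
  have L: "qpoch y q b * qpoch (q / y) q m
       = q ^ (b * m) * qpoch (q powi (- int m) * y) q b * (\<Prod>k<m. 1 - q powi (int k + 1 - int b) / y)"
    by (rule qpoch_L1[OF y q])
  have n: "n = b + (n - b)" using b by simp
  have s1: "qpoch (q * za / zi) q n = qpoch y q b * qpoch (q ^ (b + 1) * za / zi) q (n - b)"
    by (subst n, subst qpoch_add) (simp add: y_def ac_simps)
  have s2: "q / y = zi / za" using q zi za by (simp add: y_def)
  have s3: "q powi (- int m) * y = q powi (1 - int m) * za / zi"
    using q by (simp add: y_def power_int_diff power_int_minus field_simps)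
  have s4: "1 - q powi (int k + 1 - int b) / y = 1 - q ^ k * zi / (q ^ b * za)" for k
  proof -
    have "q powi (int k + 1 - int b) = q ^ k * q / q ^ b"
      using powi_diff_nat[OF q, of "k+1" b] by (simp add: add.commute mult.commute)
    then show ?thesis using q zi za by (simp add: y_def field_simps)
  qed
  show ?thesis
    unfolding s1 using L unfolding s2 s3 s4 by (simp add: algebra_simps)
qed

lemma pair_upper:
  fixes q :: "'a::field"
  assumes q: "q \<noteq> 0" and zj: "zj \<noteq> 0" and za: "za \<noteq> 0" and b: "b < n"
  shows "qpoch (za / zj) q n * qpoch (q * zj / za) q m
       = q ^ ((b + 1) * m) * (qpoch (q powi (- int m) * za / zj) q (b + 1) * qpoch (q ^ (b + 1) * za / zj) q (n - b - 1))
         * (\<Prod>k<m. 1 - q ^ k * zj / (q ^ b * za))"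
proof -
  define y where "y = za / zj"
  have y: "y \<noteq> 0" using zj za by (simp add: y_def)
  have L: "qpoch y q (b+1) * qpoch (q / y) q m
       = q ^ ((b+1) * m) * qpoch (q powi (- int m) * y) q (b+1) * (\<Prod>k<m. 1 - q powi (int k + 1 - int (b+1)) / y)"
    by (rule qpoch_L1[OF y q])
  have n: "n = (b + 1) + (n - b - 1)" using b by simp
  have s1: "qpoch (za / zj) q n = qpoch y q (b+1) * qpoch (q ^ (b + 1) * za / zj) q (n - b - 1)"
    by (subst n, subst qpoch_add) (simp add: y_def)
  have s2: "q / y = q * zj / za" using q zj za by (simp add: y_def)
  have s3: "q powi (- int m) * y = q powi (- int m) * za / zj"
    by (simp add: y_def)
  have s4: "1 - q powi (int k + 1 - int (b+1)) / y = 1 - q ^ k * zj / (q ^ b * za)" for k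
  proof -
    have "q powi (int k + 1 - int (b+1)) = q ^ k / q ^ b"
      using powi_diff_nat[OF q, of k b] by simp
    then show ?thesis using q zj za by (simp add: y_def field_simps)
  qed
  show ?thesis
    unfolding s1 s2[symmetric] using L unfolding s3 s4 by (simp add: algebra_simps)
qed

lemma q_pow_inj:
  fixes q :: "'a::field"
  assumes "q \<noteq> 0" "\<forall>n>0. q ^ n \<noteq> 1" "q ^ b = q ^ b'"
  shows "b = b'"
proof (rule ccontr)
  assume ne: "b \<noteq> b'"
  have "q ^ (max b b' - min b b') = 1"
  proof -
    have "q ^ max b b' = q ^ min b b' * q ^ (max b b' - min b b')"
      by (simp add: power_add[symmetric])
    moreover have "q ^ max b b' = q ^ min b b'" using assms(3) by (simp add: max_def min_def)
    ultimately show ?thesis using assms(1) by simp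
  qed
  moreover have "max b b' - min b b' > 0" using ne by simp
  ultimately show False using assms(2) by blast
qed

lemma self_prod:
  fixes q :: "'a::field"
  assumes q: "q \<noteq> 0" and za: "za \<noteq> 0" and b: "b < n"
  shows "(\<Prod>b'\<in>{..<n} - {b}. 1 - q ^ b' * za / (q ^ b * za))
       = qpoch (q powi (- int b)) q b * qpoch q q (n - b - 1)"
proof -
  define r where "r = n - b - 1"
  have img: "x \<in> (\<lambda>k. k + (b+1)) ` {..<r} \<longleftrightarrow> b < x \<and> x < n" for x
  proof
    assume "x \<in> (\<lambda>k. k + (b+1)) ` {..<r}" then show "b < x \<and> x < n" unfolding r_def by auto
  next
    assume h: "b < x \<and> x < n"
    then have "x = (x - (b+1)) + (b+1)" "x - (b+1) \<in> {..<r}" unfolding r_def by auto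
    then show "x \<in> (\<lambda>k. k + (b+1)) ` {..<r}" by (metis image_eqI)
  qed
  have split: "{..<n} - {b} = {..<b} \<union> ((\<lambda>k. k + (b+1)) ` {..<r})"
    apply (rule set_eqI) apply (simp only: Un_iff img) using b by auto
  have disj: "{..<b} \<inter> ((\<lambda>k. k + (b+1)) ` {..<r}) = {}" by auto
  have f: "1 - q ^ b' * za / (q ^ b * za) = 1 - q ^ b' / q ^ b" for b' using za by simp
  have p1: "(\<Prod>b'<b. 1 - q ^ b' / q ^ b) = qpoch (q powi (- int b)) q b"
    unfolding qpoch_def using q by (intro prod.cong) (auto simp: power_int_minus power_int_of_nat field_simps)
  have p2: "(\<Prod>b'\<in>(\<lambda>k. k + (b+1)) ` {..<r}. 1 - q ^ b' / q ^ b) = qpoch q q r"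
  proof -
    have "1 - q ^ (k + (b+1)) / q ^ b = 1 - q ^ k * q" for k using q by (simp add: power_add)
    then show ?thesis unfolding qpoch_def by (subst prod.reindex) (auto simp: inj_on_def mult.commute)
  qed
  show ?thesis unfolding f split r_def[symmetric]
    apply (rule trans[OF prod.union_disjoint])
       apply (simp, simp, rule disj)
    by (simp only: p1 p2)
qed



lemma term_id:
  fixes s :: nat and \<beta> :: "nat \<Rightarrow> nat" and z :: "nat \<Rightarrow> complex" and q :: complex
  assumes q: "q \<noteq> 0" and qn: "\<forall>n>0. q ^ n \<noteq> 1" and z: "\<forall>i\<in>{1..s}. z i \<noteq> 0"
    and a: "a \<in> {1..s}" and b: "b < \<beta> a"
  shows "Bcoef s \<beta> z q a b
       * (\<Prod>(i, j)\<in>{(i, j)\<in>pairs s. i \<noteq> a \<and> j \<noteq> a}.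
                   qpoch (z i / z j) q (\<beta> i) * qpoch (q * z j / z i) q (\<beta> j))
       * (\<Prod>p\<in>Sigma {1..s} (\<lambda>a. {..<\<beta> a}) - {(a, b)}. 1 - (\<lambda>(a', b'). q ^ b' * z a') p / (q ^ b * z a))
     = (\<Prod>(i, j)\<in>pairs s. qpoch (z i / z j) q (\<beta> i) * qpoch (q * z j / z i) q (\<beta> j))"
proof -
  define pf where "pf i j = qpoch (z i / z j) q (\<beta> i) * qpoch (q * z j / z i) q (\<beta> j)" for i j
  define H where "H = {(i, j)\<in>pairs s. i \<noteq> a \<and> j \<noteq> a}"
  define E where "E i = (\<Prod>k<\<beta> i. 1 - q ^ k * z i / (q ^ b * z a))" for i
  define X where "X i = qpoch (q powi (1 - int (\<beta> i)) * z a / z i) q b * qpoch (q ^ (b + 1) * z a / z i) q (\<beta> a - b)" for i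
  define Y where "Y j = qpoch (q powi (- int (\<beta> j)) * z a / z j) q (b + 1) * qpoch (q ^ (b + 1) * z a / z j) q (\<beta> a - b - 1)" for j
  define Ds where "Ds = qpoch (q powi (- int b)) q b * qpoch q q (\<beta> a - b - 1)"
  define Q where "Q = q ^ (b * (\<Sum>k\<in>{1..<a}. \<beta> k) + (b + 1) * (\<Sum>k\<in>{a<..s}. \<beta> k))"
  have za: "z a \<noteq> 0" using z a by auto
  have fin: "finite (pairs s)" unfolding pairs_def
    by (rule finite_subset[of _ "{1..s} \<times> {1..s}"]) auto
  have Bc: "Bcoef s \<beta> z q a b = Q / Ds * (\<Prod>i\<in>{1..<a}. X i) * (\<Prod>j\<in>{a<..s}. Y j)"
    unfolding Bcoef_def Q_def Ds_def X_def Y_def by simp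
  have Pset: "pairs s = H \<union> ((\<lambda>i. (i, a)) ` {1..<a} \<union> (\<lambda>j. (a, j)) ` {a<..s})"
    using a unfolding H_def pairs_def by auto
  have P: "(\<Prod>(i, j)\<in>pairs s. pf i j) = (\<Prod>(i, j)\<in>H. pf i j) * ((\<Prod>i\<in>{1..<a}. pf i a) * (\<Prod>j\<in>{a<..s}. pf a j))"
  proof -
    have fH: "finite H" by (rule finite_subset[OF _ fin]) (auto simp: H_def)
    have "(\<Prod>(i, j)\<in>pairs s. pf i j) = (\<Prod>(i, j)\<in>H. pf i j) * (\<Prod>(i, j)\<in>(\<lambda>i. (i, a)) ` {1..<a} \<union> (\<lambda>j. (a, j)) ` {a<..s}. pf i j)"
      unfolding Pset apply (rule prod.union_disjoint) apply (rule fH) by (auto simp: H_def)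
    also have "(\<Prod>(i, j)\<in>(\<lambda>i. (i, a)) ` {1..<a} \<union> (\<lambda>j. (a, j)) ` {a<..s}. pf i j)
        = (\<Prod>(i, j)\<in>(\<lambda>i. (i, a)) ` {1..<a}. pf i j) * (\<Prod>(i, j)\<in>(\<lambda>j. (a, j)) ` {a<..s}. pf i j)"
      by (rule prod.union_disjoint) auto
    also have "(\<Prod>(i, j)\<in>(\<lambda>i. (i, a)) ` {1..<a}. pf i j) = (\<Prod>i\<in>{1..<a}. pf i a)"
      by (subst prod.reindex) (auto simp: inj_on_def)
    also have "(\<Prod>(i, j)\<in>(\<lambda>j. (a, j)) ` {a<..s}. pf i j) = (\<Prod>j\<in>{a<..s}. pf a j)"
      by (subst prod.reindex) (auto simp: inj_on_def)
    finally show ?thesis .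
  qed
  let ?f = "\<lambda>p. 1 - (\<lambda>(a', b'). q ^ b' * z a') p / (q ^ b * z a)"
  have Dset: "Sigma {1..s} (\<lambda>a. {..<\<beta> a}) - {(a, b)}
      = Sigma {a} (\<lambda>a'. {..<\<beta> a} - {b}) \<union> (Sigma {1..<a} (\<lambda>a. {..<\<beta> a}) \<union> Sigma {a<..s} (\<lambda>a. {..<\<beta> a}))"
    using a apply auto by (metis linorder_neqE_nat)
  have D: "(\<Prod>p\<in>Sigma {1..s} (\<lambda>a. {..<\<beta> a}) - {(a, b)}. ?f p)
      = (\<Prod>b'\<in>{..<\<beta> a} - {b}. 1 - q ^ b' * z a / (q ^ b * z a)) * ((\<Prod>i\<in>{1..<a}. E i) * (\<Prod>j\<in>{a<..s}. E j))"
  proof -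
    have fc: "?f = (\<lambda>(x, y). 1 - q ^ y * z x / (q ^ b * z a))" by (rule ext) (simp add: split_beta)
    have "(\<Prod>p\<in>Sigma {1..s} (\<lambda>a. {..<\<beta> a}) - {(a, b)}. ?f p)
        = (\<Prod>p\<in>Sigma {a} (\<lambda>a'. {..<\<beta> a} - {b}). ?f p) * ((\<Prod>p\<in>Sigma {1..<a} (\<lambda>a. {..<\<beta> a}). ?f p) * (\<Prod>p\<in>Sigma {a<..s} (\<lambda>a. {..<\<beta> a}). ?f p))"
      unfolding Dset
      apply (subst prod.union_disjoint, force, force, force)
      apply (subst prod.union_disjoint, force, force, force)
      ..
    also have "(\<Prod>p\<in>Sigma {a} (\<lambda>a'. {..<\<beta> a} - {b}). ?f p) = (\<Prod>b'\<in>{..<\<beta> a} - {b}. 1 - q ^ b' * z a / (q ^ b * z a))"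
      unfolding fc by (subst prod.Sigma[symmetric]) auto
    also have "(\<Prod>p\<in>Sigma {1..<a} (\<lambda>a. {..<\<beta> a}). ?f p) = (\<Prod>i\<in>{1..<a}. E i)"
      unfolding E_def fc by (subst prod.Sigma[symmetric]) auto
    also have "(\<Prod>p\<in>Sigma {a<..s} (\<lambda>a. {..<\<beta> a}). ?f p) = (\<Prod>j\<in>{a<..s}. E j)"
      unfolding E_def fc by (subst prod.Sigma[symmetric]) auto
    finally show ?thesis .
  qed
  have self: "(\<Prod>b'\<in>{..<\<beta> a} - {b}. 1 - q ^ b' * z a / (q ^ b * z a)) = Ds"
    unfolding Ds_def by (rule self_prod[OF q za b])
  have Dsnz: "Ds \<noteq> 0"
  proof -
    have "1 - q ^ b' * z a / (q ^ b * z a) \<noteq> 0" if "b' \<in> {..<\<beta> a} - {b}" for b'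
    proof
      assume "1 - q ^ b' * z a / (q ^ b * z a) = 0"
      then have "q ^ b' = q ^ b" using q za by (simp add: field_simps)
      then have "b' = b" using q_pow_inj[OF q qn] by blast
      then show False using that by simp
    qed
    then show ?thesis unfolding self[symmetric] by (simp add: prod_zero_iff)
  qed
  have low: "pf i a = q ^ (b * \<beta> i) * X i * E i" if "i \<in> {1..<a}" for i
    unfolding pf_def X_def E_def
    by (rule pair_lower[OF q _ za b]) (use that z a in auto)
  have up: "pf a j = q ^ ((b + 1) * \<beta> j) * Y j * E j" if "j \<in> {a<..s}" for j
    unfolding pf_def Y_def E_def
    by (rule pair_upper[OF q _ za b]) (use that z a in auto)
  have Qs: "Q = (\<Prod>i\<in>{1..<a}. q ^ (b * \<beta> i)) * (\<Prod>j\<in>{a<..s}. q ^ ((b + 1) * \<beta> j))"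
    unfolding Q_def power_add sum_distrib_left power_sum ..
  have "(\<Prod>i\<in>{1..<a}. pf i a) = (\<Prod>i\<in>{1..<a}. q ^ (b * \<beta> i)) * (\<Prod>i\<in>{1..<a}. X i) * (\<Prod>i\<in>{1..<a}. E i)"
    using low by (simp add: prod.distrib)
  moreover have "(\<Prod>j\<in>{a<..s}. pf a j) = (\<Prod>j\<in>{a<..s}. q ^ ((b + 1) * \<beta> j)) * (\<Prod>j\<in>{a<..s}. Y j) * (\<Prod>j\<in>{a<..s}. E j)"
    using up by (simp add: prod.distrib)
  ultimately show ?thesis
    unfolding pf_def[symmetric] H_def[symmetric] P D self Bc Qs using Dsnz
    by (simp add: field_simps)
qed



lemma aux_cancel:
  fixes B H D u :: complex
  assumes "D \<noteq> 0"
  shows "(B * H * D) * (inverse D * inverse u) = inverse u * B * H"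
proof -
  have "(B * H * D) * (inverse D * inverse u) = (inverse u * B * H) * (D * inverse D)" by (simp only: mult_ac)
  then show ?thesis using assms by simp
qed

lemma generic:
  fixes s :: nat and \<beta> :: "nat \<Rightarrow> nat" and z :: "nat \<Rightarrow> complex" and w q :: complex
  assumes "s \<ge> 1"
    and "\<forall>i\<in>{1..s}. \<beta> i > 0"
    and q: "q \<noteq> 0" and qn: "\<forall>n>0. q ^ n \<noteq> 1"
    and w: "w \<noteq> 0" and z: "\<forall>i\<in>{1..s}. z i \<noteq> 0"
    and poch: "\<forall>i\<in>{1..s}. qpoch (z i / w) q (\<beta> i) \<noteq> 0"
    and gen: "\<forall>a\<in>{1..s}. \<forall>a'\<in>{1..s}. a \<noteq> a' \<longrightarrow> (\<forall>b<\<beta> a. \<forall>b'<\<beta> a'. q ^ b * z a \<noteq> q ^ b' * z a')"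
  shows "(\<Prod>(i, j)\<in>pairs s. qpoch (z i / z j) q (\<beta> i) * qpoch (q * z j / z i) q (\<beta> j))
           * (\<Prod>i\<in>{1..s}. inverse (qpoch (z i / w) q (\<beta> i)))
         = (\<Sum>a\<in>{1..s}. \<Sum>b<\<beta> a.
              inverse (1 - q ^ b * z a / w) * Bcoef s \<beta> z q a b
              * (\<Prod>(i, j)\<in>{(i, j)\<in>pairs s. i \<noteq> a \<and> j \<noteq> a}.
                   qpoch (z i / z j) q (\<beta> i) * qpoch (q * z j / z i) q (\<beta> j)))"
proof -
  define I where "I = Sigma {1..s} (\<lambda>a. {..<\<beta> a})"
  define n where "n = (\<lambda>(a'::nat, b'::nat). q ^ b' * z a')"
  define x where "x = inverse w"
  define P where "P = (\<Prod>(i, j)\<in>pairs s. qpoch (z i / z j) q (\<beta> i) * qpoch (q * z j / z i) q (\<beta> j))"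
  have finI: "finite I" unfolding I_def by auto
  have neI: "I \<noteq> {}" unfolding I_def using assms(1,2) by force
  have injI: "inj_on n I"
  proof (rule inj_onI)
    fix p p' assume p: "p \<in> I" and p': "p' \<in> I" and e: "n p = n p'"
    obtain a b where ab: "p = (a, b)" by (cases p)
    obtain a' b' where ab': "p' = (a', b')" by (cases p')
    have "a = a'" using gen p p' e unfolding ab ab' I_def n_def by auto (meson atLeastAtMost_iff)
    moreover have "b = b'"
    proof -
      have "q ^ b * z a = q ^ b' * z a" using e \<open>a = a'\<close> unfolding ab ab' n_def by simp
      moreover have "z a \<noteq> 0" using z p unfolding ab I_def by auto
      ultimately have "q ^ b = q ^ b'" by simp
      then show ?thesis using q_pow_inj[OF q qn] by blast
    qed
    ultimately show "p = p'" using ab ab' by simp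
  qed
  have nnz: "\<forall>i\<in>I. n i \<noteq> 0" using z q unfolding I_def n_def by auto
  have fac: "1 - q ^ b * (z a / w) \<noteq> 0" if "a \<in> {1..s}" "b < \<beta> a" for a b
  proof -
    have "qpoch (z a / w) q (\<beta> a) \<noteq> 0" using poch that by auto
    then have "\<forall>k\<in>{..<\<beta> a}. 1 - q ^ k * (z a / w) \<noteq> 0" unfolding qpoch_def by (simp add: prod_zero_iff del: times_divide_eq_right)
    then show ?thesis using that by blast
  qed
  have xnz: "\<forall>i\<in>I. 1 - n i * x \<noteq> 0"
    using fac unfolding I_def n_def x_def by (auto simp: divide_inverse mult.assoc)
  have PF: "inverse (\<Prod>i\<in>I. 1 - n i * x)
       = (\<Sum>i\<in>I. inverse (\<Prod>j\<in>I - {i}. 1 - n j / n i) * inverse (1 - n i * x))"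
    by (rule partial_fractions[OF finI neI injI nnz xnz])
  have prodeq: "(\<Prod>i\<in>{1..s}. inverse (qpoch (z i / w) q (\<beta> i))) = inverse (\<Prod>i\<in>I. 1 - n i * x)"
  proof -
    have "(\<Prod>i\<in>{1..s}. inverse (qpoch (z i / w) q (\<beta> i))) = inverse (\<Prod>i\<in>{1..s}. qpoch (z i / w) q (\<beta> i))"
      using prod_inversef[of "\<lambda>i. qpoch (z i / w) q (\<beta> i)" "{1..s}"] by (simp add: o_def)
    also have "(\<Prod>i\<in>{1..s}. qpoch (z i / w) q (\<beta> i)) = (\<Prod>i\<in>{1..s}. \<Prod>k<\<beta> i. 1 - q ^ k * (z i / w))"
      unfolding qpoch_def ..
    also have "\<dots> = (\<Prod>(i, k)\<in>I. 1 - q ^ k * (z i / w))"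
      unfolding I_def by (rule prod.Sigma) auto
    also have "\<dots> = (\<Prod>i\<in>I. 1 - n i * x)"
      unfolding n_def x_def by (rule prod.cong) (auto simp: divide_inverse mult.assoc)
    finally show ?thesis .
  qed
  have T: "P * (inverse (\<Prod>j\<in>I - {(a, b)}. 1 - n j / n (a, b)) * inverse (1 - n (a, b) * x))
      = inverse (1 - q ^ b * z a / w) * Bcoef s \<beta> z q a b
              * (\<Prod>(i, j)\<in>{(i, j)\<in>pairs s. i \<noteq> a \<and> j \<noteq> a}.
                   qpoch (z i / z j) q (\<beta> i) * qpoch (q * z j / z i) q (\<beta> j))"
    if ab: "a \<in> {1..s}" "b < \<beta> a" for a b
  proof -
    have abI: "(a, b) \<in> I" using ab unfolding I_def by auto
    have tid: "Bcoef s \<beta> z q a b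
       * (\<Prod>(i, j)\<in>{(i, j)\<in>pairs s. i \<noteq> a \<and> j \<noteq> a}.
                   qpoch (z i / z j) q (\<beta> i) * qpoch (q * z j / z i) q (\<beta> j))
       * (\<Prod>j\<in>I - {(a, b)}. 1 - n j / n (a, b)) = P"
      unfolding P_def n_def I_def using term_id[where s=s and \<beta>=\<beta> and z=z and q=q and a=a and b=b, OF q qn z ab] by simp
    have Dnz: "(\<Prod>j\<in>I - {(a, b)}. 1 - n j / n (a, b)) \<noteq> 0"
    proof -
      have "1 - n j / n (a, b) \<noteq> 0" if "j \<in> I - {(a, b)}" for j
      proof
        assume "1 - n j / n (a, b) = 0"
        then have "n j = n (a, b)" using nnz abI by (simp add: field_simps)
        then show False using injI that abI by (auto dest: inj_onD)
      qed
      then show ?thesis using finI by (subst prod_zero_iff) auto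
    qed
    have nx: "n (a, b) * x = q ^ b * z a / w" unfolding n_def x_def by (simp add: divide_inverse)
    show ?thesis unfolding nx tid[symmetric] using Dnz by (rule aux_cancel)
  qed
  have "P * (\<Prod>i\<in>{1..s}. inverse (qpoch (z i / w) q (\<beta> i)))
      = (\<Sum>i\<in>I. P * (inverse (\<Prod>j\<in>I - {i}. 1 - n j / n i) * inverse (1 - n i * x)))"
    unfolding prodeq PF sum_distrib_left ..
  also have "\<dots> = (\<Sum>a\<in>{1..s}. \<Sum>b<\<beta> a. P * (inverse (\<Prod>j\<in>I - {(a, b)}. 1 - n j / n (a, b)) * inverse (1 - n (a, b) * x)))"
  proof -
    define G where "G i = P * (inverse (\<Prod>j\<in>I - {i}. 1 - n j / n i) * inverse (1 - n i * x))" for i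
    have "(\<Sum>a\<in>{1..s}. \<Sum>b<\<beta> a. G (a, b)) = (\<Sum>(a, b)\<in>Sigma {1..s} (\<lambda>a. {..<\<beta> a}). G (a, b))"
      by (rule sum.Sigma) auto
    then have "(\<Sum>i\<in>I. G i) = (\<Sum>a\<in>{1..s}. \<Sum>b<\<beta> a. G (a, b))" unfolding I_def by simp
    then show ?thesis unfolding G_def .
  qed
  also have "\<dots> = (\<Sum>a\<in>{1..s}. \<Sum>b<\<beta> a.
              inverse (1 - q ^ b * z a / w) * Bcoef s \<beta> z q a b
              * (\<Prod>(i, j)\<in>{(i, j)\<in>pairs s. i \<noteq> a \<and> j \<noteq> a}.
                   qpoch (z i / z j) q (\<beta> i) * qpoch (q * z j / z i) q (\<beta> j)))"
    by (intro sum.cong refl T) auto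
  finally show ?thesis unfolding P_def .
qed



lemma ev_pow_ne:
  fixes C :: complex
  assumes m: "m > 0"
  shows "eventually (\<lambda>u. u ^ m \<noteq> C) (at 1)"
proof (cases "C = 1")
  case False
  have "((\<lambda>u::complex. u ^ m) \<longlongrightarrow> 1 ^ m) (at 1)" by (intro tendsto_intros)
  then show ?thesis using False by (intro tendsto_imp_eventually_ne) auto
next
  case True
  have "((\<lambda>u::complex. \<Sum>i<m. u ^ i) \<longlongrightarrow> (\<Sum>i<m. 1 ^ i)) (at 1)" by (intro tendsto_intros)
  moreover have "(\<Sum>i<m. (1::complex) ^ i) \<noteq> 0" using m by simp
  ultimately have "eventually (\<lambda>u::complex. (\<Sum>i<m. u ^ i) \<noteq> 0) (at 1)"
    by (intro tendsto_imp_eventually_ne) auto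
  moreover have "eventually (\<lambda>u::complex. u \<noteq> 1) (at 1)" by (rule eventually_neq_at_within)
  ultimately show ?thesis
  proof eventually_elim
    case (elim u)
    have "u ^ m - 1 = (u - 1) * (\<Sum>i<m. u ^ i)" by (rule power_diff_1_eq)
    then have "u ^ m - 1 \<noteq> 0" using elim by simp
    then show ?case using True by simp
  qed
qed

lemma ev_gen1:
  fixes c d :: complex
  assumes c: "c \<noteq> 0" and lt: "a' < a"
  shows "eventually (\<lambda>u. c * u ^ a \<noteq> d * u ^ a') (at 1)"
proof -
  have "eventually (\<lambda>u. u ^ (a - a') \<noteq> d / c) (at 1)" using lt by (intro ev_pow_ne) auto
  moreover have "eventually (\<lambda>u::complex. u \<noteq> 0) (at 1)" by (rule eventually_neq_at_within)
  ultimately show ?thesis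
  proof eventually_elim
    case (elim u)
    show ?case
    proof
      assume e: "c * u ^ a = d * u ^ a'"
      have "u ^ a = u ^ a' * u ^ (a - a')" using lt by (simp add: power_add[symmetric])
      then have "u ^ a' * (c * u ^ (a - a')) = u ^ a' * d" using e by (simp add: algebra_simps)
      then have "c * u ^ (a - a') = d" using elim by simp
      then show False using elim c by (simp add: field_simps)
    qed
  qed
qed

lemma ev_gen:
  fixes c d :: complex
  assumes c: "c \<noteq> 0" and d: "d \<noteq> 0" and ne: "a \<noteq> a'"
  shows "eventually (\<lambda>u. c * u ^ a \<noteq> d * u ^ a') (at 1)"
proof (cases "a' < a")
  case True then show ?thesis by (rule ev_gen1[OF c])
next
  case False
  then have "a < a'" using ne by simp
  from ev_gen1[OF d this, of c] show ?thesis by (rule eventually_mono) auto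
qed

lemma qpoch_cont [continuous_intros]:
  fixes f :: "complex \<Rightarrow> complex"
  assumes "continuous F f"
  shows "continuous F (\<lambda>u. qpoch (f u) q n)"
  unfolding qpoch_def by (intro continuous_intros assms)

lemma Ds_nz:
  fixes q :: complex
  assumes q: "q \<noteq> 0" and qn: "\<forall>n>0. q ^ n \<noteq> 1" and b: "b < n"
  shows "qpoch (q powi (- int b)) q b * qpoch q q (n - b - 1) \<noteq> 0"
proof -
  have "1 - q ^ b' * 1 / (q ^ b * 1) \<noteq> 0" if "b' \<in> {..<n} - {b}" for b'
  proof
    assume "1 - q ^ b' * 1 / (q ^ b * 1) = 0"
    then have "q ^ b' = q ^ b" using q by (simp add: field_simps)
    then have "b' = b" using q_pow_inj[OF q qn] by blast
    then show False using that by simp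
  qed
  then have "(\<Prod>b'\<in>{..<n} - {b}. 1 - q ^ b' * 1 / (q ^ b * 1)) \<noteq> 0" by (subst prod_zero_iff) auto
  moreover have "(\<Prod>b'\<in>{..<n} - {b}. 1 - q ^ b' * 1 / (q ^ b * 1)) = qpoch (q powi (- int b)) q b * qpoch q q (n - b - 1)"
    by (rule self_prod[OF q _ b]) simp
  ultimately show ?thesis by metis
qed



theorem proposition4p2:
  fixes s :: nat and \<beta> :: "nat \<Rightarrow> nat" and z :: "nat \<Rightarrow> complex" and w q :: complex
  assumes "s \<ge> 1"
    and "\<forall>i\<in>{1..s}. \<beta> i > 0"
    and "q \<noteq> 0" and "\<forall>n>0. q ^ n \<noteq> 1"
    and "w \<noteq> 0" and "\<forall>i\<in>{1..s}. z i \<noteq> 0"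
    and "\<forall>i\<in>{1..s}. qpoch (z i / w) q (\<beta> i) \<noteq> 0"
  shows "(\<Prod>(i, j)\<in>pairs s. qpoch (z i / z j) q (\<beta> i) * qpoch (q * z j / z i) q (\<beta> j))
           * (\<Prod>i\<in>{1..s}. inverse (qpoch (z i / w) q (\<beta> i)))
         = (\<Sum>a\<in>{1..s}. \<Sum>b<\<beta> a.
              inverse (1 - q ^ b * z a / w) * Bcoef s \<beta> z q a b
              * (\<Prod>(i, j)\<in>{(i, j)\<in>pairs s. i \<noteq> a \<and> j \<noteq> a}.
                   qpoch (z i / z j) q (\<beta> i) * qpoch (q * z j / z i) q (\<beta> j)))"
proof -
  note s1 = assms(1) and bpos = assms(2) and q = assms(3) and qn = assms(4) and w = assms(5)
    and z = assms(6) and poch = assms(7)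
  define zz where "zz u i = z i * u ^ i" for u :: complex and i
  define L where "L u = (\<Prod>(i, j)\<in>pairs s. qpoch (zz u i / zz u j) q (\<beta> i) * qpoch (q * zz u j / zz u i) q (\<beta> j))
           * (\<Prod>i\<in>{1..s}. inverse (qpoch (zz u i / w) q (\<beta> i)))" for u
  define R where "R u = (\<Sum>a\<in>{1..s}. \<Sum>b<\<beta> a.
              inverse (1 - q ^ b * zz u a / w) * Bcoef s \<beta> (zz u) q a b
              * (\<Prod>(i, j)\<in>{(i, j)\<in>pairs s. i \<noteq> a \<and> j \<noteq> a}.
                   qpoch (zz u i / zz u j) q (\<beta> i) * qpoch (q * zz u j / zz u i) q (\<beta> j)))" for u
  have zz1: "zz 1 = z" by (simp add: fun_eq_iff zz_def)
  have fac: "1 - q ^ b * z a / w \<noteq> 0" if "a \<in> {1..s}" "b < \<beta> a" for a b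
  proof -
    have "qpoch (z a / w) q (\<beta> a) \<noteq> 0" using poch that by auto
    then have "\<forall>k\<in>{..<\<beta> a}. 1 - q ^ k * (z a / w) \<noteq> 0" unfolding qpoch_def by (simp add: prod_zero_iff del: times_divide_eq_right)
    then show ?thesis using that by auto
  qed
  have contL: "isCont L 1"
    unfolding L_def zz_def split_beta
    by (intro continuous_intros) (auto simp: pairs_def z poch w)
  have contR: "isCont R 1"
    unfolding R_def zz_def split_beta Bcoef_def
    by (intro continuous_intros) (use z fac w in \<open>auto simp: pairs_def\<close>)
  have ev: "eventually (\<lambda>u. L u = R u) (at 1)"
  proof -
    have e0: "eventually (\<lambda>u::complex. u \<noteq> 0) (at 1)" by (rule eventually_neq_at_within)
    have e1: "eventually (\<lambda>u. \<forall>i\<in>{1..s}. qpoch (zz u i / w) q (\<beta> i) \<noteq> 0) (at 1)"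
    proof (rule eventually_ball_finite[OF finite_atLeastAtMost], rule ballI)
      fix i assume i: "i \<in> {1..s}"
      have "((\<lambda>u. qpoch (zz u i / w) q (\<beta> i)) \<longlongrightarrow> qpoch (zz 1 i / w) q (\<beta> i)) (at 1)"
      proof -
        have "isCont (\<lambda>u. qpoch (zz u i / w) q (\<beta> i)) 1"
          unfolding zz_def by (intro continuous_intros) (auto simp: w)
        then show ?thesis by (simp add: isCont_def)
      qed
      moreover have "qpoch (zz 1 i / w) q (\<beta> i) \<noteq> 0" using poch i zz1 by simp
      ultimately show "eventually (\<lambda>u. qpoch (zz u i / w) q (\<beta> i) \<noteq> 0) (at 1)"
        by (rule tendsto_imp_eventually_ne)
    qed
    have e2: "eventually (\<lambda>u. \<forall>a\<in>{1..s}. \<forall>a'\<in>{1..s}. \<forall>b\<in>{..<\<beta> a}. \<forall>b'\<in>{..<\<beta> a'}.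
          a \<noteq> a' \<longrightarrow> q ^ b * zz u a \<noteq> q ^ b' * zz u a') (at 1)"
    proof (intro eventually_ball_finite finite_atLeastAtMost finite_lessThan ballI)
      fix a a' b b' assume a: "a \<in> {1..s}" and a': "a' \<in> {1..s}"
      show "eventually (\<lambda>u. a \<noteq> a' \<longrightarrow> q ^ b * zz u a \<noteq> q ^ b' * zz u a') (at 1)"
      proof (cases "a = a'")
        case True then show ?thesis by simp
      next
        case False
        have "q ^ b * z a \<noteq> 0" "q ^ b' * z a' \<noteq> 0" using q z a a' by auto
        from ev_gen[OF this False] show ?thesis
          by (rule eventually_mono) (simp add: zz_def mult.assoc)
      qed
    qed
    from e0 e1 e2 show ?thesis
    proof eventually_elim
      case (elim u)
      have zu: "\<forall>i\<in>{1..s}. zz u i \<noteq> 0" using z elim by (simp add: zz_def)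
      have gu: "\<forall>a\<in>{1..s}. \<forall>a'\<in>{1..s}. a \<noteq> a' \<longrightarrow> (\<forall>b<\<beta> a. \<forall>b'<\<beta> a'. q ^ b * zz u a \<noteq> q ^ b' * zz u a')"
        using elim(3) by auto
      show ?case unfolding L_def R_def
        using generic[OF s1 bpos q qn w zu elim(2) gu] .
    qed
  qed
  have "(L \<longlongrightarrow> L 1) (at 1)" using contL by (simp add: isCont_def)
  moreover have "(R \<longlongrightarrow> R 1) (at 1)" using contR by (simp add: isCont_def)
  ultimately have "(R \<longlongrightarrow> L 1) (at 1)" "(R \<longlongrightarrow> R 1) (at 1)" using ev
    by (auto intro: Lim_transform_eventually)
  then have "L 1 = R 1" by (rule tendsto_unique[OF at_neq_bot])
  then show ?thesis unfolding L_def R_def zz1 .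
qed

end
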